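(* Let $G$ be a $d$-regular graph with a vertex $u$. The vertices $(0,u)$ and $(1,u)$ are strongly cospectral (with respect to the Laplacian) in $\uparrow^{2}G$ if and only if $d\notin\sigma_u(G)$. In particular, for any vertex $u$, the vertices $(0,u)$ and $(1,u)$ are strongly cospectral in: (i) $\uparrow^{2}K_{d+1}$ for all $d\geq 1$; (ii) $\uparrow^{2}C_n$ if and only if $n\not\equiv 0 \pmod 4$; (iii) $\uparrow^{2}Q_d$ if and only if $d$ is odd.
   Context: All graphs are simple, undirected and unweighted. For a graph $X$ with Laplacian $L=D-A$, spectral decomposition $L=\sum_\lambda \lambda E_\lambda$ over its distinct eigenvalues ($E_\lambda$ orthogonal eigenprojections), the eigenvalue support of a vertex $u$ is $\sigma_u(X)=\{\lambda:E_\lambda\mathbf{e}_u\neq\mathbf{0}\}$; vertices $u,v$ are strongly cospectral if $E_\lambda\mathbf{e}_u=\pm E_\lambda\mathbf{e}_v$ for all $\lambda\in\sigma_u(X)$. The blow-up $\uparrow^{2}G$ has vertex set $\mathbb{Z}_2\times V(G)$, with $(l,u)\sim(m,v)$ iff $u\sim v$ in $G$. $K_n$ is the complete graph, $C_n$ the $n$-cycle, $Q_d$ the $d$-dimensional hypercube. *)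

theory Defs
  imports "HOL-Analysis.Analysis"
begin

definition simple_graph :: "'a set \<Rightarrow> ('a \<Rightarrow> 'a \<Rightarrow> bool) \<Rightarrow> bool" where
  "simple_graph V E \<longleftrightarrow> finite V \<and> (\<forall>x y. E x y \<longrightarrow> x \<in> V \<and> y \<in> V)
     \<and> (\<forall>x y. E x y \<longrightarrow> E y x) \<and> (\<forall>x. \<not> E x x)"

definition degree :: "'a set \<Rightarrow> ('a \<Rightarrow> 'a \<Rightarrow> bool) \<Rightarrow> 'a \<Rightarrow> nat" where
  "degree V E u = card {v \<in> V. E u v}"

definition regular :: "'a set \<Rightarrow> ('a \<Rightarrow> 'a \<Rightarrow> bool) \<Rightarrow> nat \<Rightarrow> bool" where
  "regular V E d \<longleftrightarrow> (\<forall>u \<in> V. degree V E u = d)"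

definition laplacian :: "'a set \<Rightarrow> ('a \<Rightarrow> 'a \<Rightarrow> bool) \<Rightarrow> 'a \<Rightarrow> 'a \<Rightarrow> real" where
  "laplacian V E u v = (if u = v then real (degree V E u) else 0) - (if E u v then 1 else 0)"

definition vecs :: "'a set \<Rightarrow> ('a \<Rightarrow> real) set" where
  "vecs V = {x. \<forall>w. w \<notin> V \<longrightarrow> x w = 0}"

definition inner_V :: "'a set \<Rightarrow> ('a \<Rightarrow> real) \<Rightarrow> ('a \<Rightarrow> real) \<Rightarrow> real" where
  "inner_V V x y = (\<Sum>w\<in>V. x w * y w)"

definition lap_mult :: "'a set \<Rightarrow> ('a \<Rightarrow> 'a \<Rightarrow> bool) \<Rightarrow> ('a \<Rightarrow> real) \<Rightarrow> 'a \<Rightarrow> real" where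
  "lap_mult V E x = (\<lambda>u. if u \<in> V then (\<Sum>v\<in>V. laplacian V E u v * x v) else 0)"

definition eigenspace_L :: "'a set \<Rightarrow> ('a \<Rightarrow> 'a \<Rightarrow> bool) \<Rightarrow> real \<Rightarrow> ('a \<Rightarrow> real) set" where
  "eigenspace_L V E c = {x \<in> vecs V. lap_mult V E x = (\<lambda>u. c * x u)}"

definition is_L_eigenvalue :: "'a set \<Rightarrow> ('a \<Rightarrow> 'a \<Rightarrow> bool) \<Rightarrow> real \<Rightarrow> bool" where
  "is_L_eigenvalue V E c \<longleftrightarrow> (\<exists>x \<in> eigenspace_L V E c. x \<noteq> (\<lambda>_. 0))"

definition eigproj :: "'a set \<Rightarrow> ('a \<Rightarrow> 'a \<Rightarrow> bool) \<Rightarrow> real \<Rightarrow> ('a \<Rightarrow> real) \<Rightarrow> ('a \<Rightarrow> real)" where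
  "eigproj V E c y = (THE p. p \<in> eigenspace_L V E c
      \<and> (\<forall>z \<in> eigenspace_L V E c. inner_V V (\<lambda>w. y w - p w) z = 0))"

definition unit_vec :: "'a \<Rightarrow> 'a \<Rightarrow> real" where
  "unit_vec u = (\<lambda>w. if w = u then 1 else 0)"

definition eig_support :: "'a set \<Rightarrow> ('a \<Rightarrow> 'a \<Rightarrow> bool) \<Rightarrow> 'a \<Rightarrow> real set" where
  "eig_support V E u = {c. is_L_eigenvalue V E c \<and> eigproj V E c (unit_vec u) \<noteq> (\<lambda>_. 0)}"

definition strongly_cospectral :: "'a set \<Rightarrow> ('a \<Rightarrow> 'a \<Rightarrow> bool) \<Rightarrow> 'a \<Rightarrow> 'a \<Rightarrow> bool" where
  "strongly_cospectral V E u v \<longleftrightarrow>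
     (\<forall>c \<in> eig_support V E u.
        eigproj V E c (unit_vec u) = eigproj V E c (unit_vec v)
      \<or> eigproj V E c (unit_vec u) = (\<lambda>w. - eigproj V E c (unit_vec v) w))"

definition blowup2_V :: "'a set \<Rightarrow> (nat \<times> 'a) set" where
  "blowup2_V V = {0::nat, 1} \<times> V"

definition blowup2_E :: "('a \<Rightarrow> 'a \<Rightarrow> bool) \<Rightarrow> nat \<times> 'a \<Rightarrow> nat \<times> 'a \<Rightarrow> bool" where
  "blowup2_E E = (\<lambda>(l, u) (m, v). l \<in> {0, 1} \<and> m \<in> {0, 1} \<and> E u v)"

definition complete_V :: "nat \<Rightarrow> nat set" where "complete_V n = {0..<n}"
definition complete_E :: "nat \<Rightarrow> nat \<Rightarrow> nat \<Rightarrow> bool" where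
  "complete_E n x y \<longleftrightarrow> x < n \<and> y < n \<and> x \<noteq> y"

text \<open>Cycle C_n on {0..<n} (meant for n \<ge> 3): i ~ i+1 mod n.\<close>
definition cycle_V :: "nat \<Rightarrow> nat set" where "cycle_V n = {0..<n}"
definition cycle_E :: "nat \<Rightarrow> nat \<Rightarrow> nat \<Rightarrow> bool" where
  "cycle_E n x y \<longleftrightarrow> x < n \<and> y < n \<and> x \<noteq> y \<and> (y = (x + 1) mod n \<or> x = (y + 1) mod n)"

text \<open>Hypercube Q_d: vertices are subsets of {0..<d} (i.e. 0/1 vectors of length d),
  adjacent iff they differ in exactly one coordinate.\<close>
definition cube_V :: "nat \<Rightarrow> nat set set" where "cube_V d = Pow {0..<d}"
definition cube_E :: "nat \<Rightarrow> nat set \<Rightarrow> nat set \<Rightarrow> bool" where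
  "cube_E d A B \<longleftrightarrow> A \<in> cube_V d \<and> B \<in> cube_V d \<and> card ((A - B) \<union> (B - A)) = 1"

end

theory Submission
  imports Defs
begin

definition subsp :: "'a set \<Rightarrow> ('a \<Rightarrow> real) set \<Rightarrow> bool" where
  "subsp W S \<longleftrightarrow> S \<subseteq> vecs W \<and> (\<lambda>_. 0) \<in> S \<and> (\<forall>x\<in>S. \<forall>y\<in>S. (\<lambda>w. x w + y w) \<in> S)
     \<and> (\<forall>a. \<forall>x\<in>S. (\<lambda>w. a * x w) \<in> S)"

lemma inner_diff_left: "inner_V V (\<lambda>w. a w - b w) z = inner_V V a z - inner_V V b z"
  by (simp add: inner_V_def sum_subtractf left_diff_distrib)
lemma inner_add_left: "inner_V V (\<lambda>w. a w + b w) z = inner_V V a z + inner_V V b z"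
  by (simp add: inner_V_def sum.distrib distrib_right)
lemma inner_diff_right: "inner_V V z (\<lambda>w. a w - b w) = inner_V V z a - inner_V V z b"
  by (simp add: inner_V_def sum_subtractf right_diff_distrib)
lemma inner_add_right: "inner_V V z (\<lambda>w. a w + b w) = inner_V V z a + inner_V V z b"
  by (simp add: inner_V_def sum.distrib distrib_left)
lemma inner_scale_left: "inner_V V (\<lambda>w. c * a w) z = c * inner_V V a z"
  by (simp add: inner_V_def sum_distrib_left mult.assoc)
lemma inner_scale_right: "inner_V V z (\<lambda>w. c * a w) = c * inner_V V z a"
  by (simp add: inner_V_def sum_distrib_left mult.assoc mult.left_commute)
lemma inner_commute: "inner_V V a b = inner_V V b a"
  by (simp add: inner_V_def mult.commute)
lemma inner_zero_right: "inner_V V a (\<lambda>_. 0) = 0"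
  by (simp add: inner_V_def)

lemma inner_self_pos:
  assumes "finite V" "w \<in> V" "r w \<noteq> 0"
  shows "inner_V V r r > 0"
proof -
  have "r w * r w \<le> inner_V V r r" unfolding inner_V_def
    using assms by (intro member_le_sum) auto
  moreover have "r w * r w > 0" using assms(3) not_real_square_gt_zero by blast
  ultimately show ?thesis by linarith
qed

lemma inner_self_zero:
  assumes "finite V" "r \<in> vecs V" "inner_V V r r = 0"
  shows "r = (\<lambda>_. 0)"
proof
  fix w show "r w = 0"
  proof (cases "w \<in> V")
    case True
    show ?thesis using inner_self_pos[OF assms(1) True, of r] assms(3) by force
  next
    case False then show ?thesis using assms(2) by (simp add: vecs_def)
  qed
qed

lemma proj_exists_aux:
  assumes "finite V" "finite W"
  shows "W \<subseteq> V \<Longrightarrow> subsp W S \<Longrightarrow> \<exists>p\<in>S. \<forall>z\<in>S. inner_V V (\<lambda>w. y w - p w) z = 0"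
  using assms(2)
proof (induction W arbitrary: S y rule: finite_induct)
  case empty
  then have "S = {\<lambda>_. 0}" by (auto simp: subsp_def vecs_def)
  then show ?case by (auto simp: inner_zero_right)
next
  case (insert w W)
  define S0 where "S0 = {x\<in>S. x w = 0}"
  have sub0: "subsp W S0" using insert.prems(2) unfolding subsp_def S0_def vecs_def by auto
  have IH: "\<And>y. \<exists>p\<in>S0. \<forall>z\<in>S0. inner_V V (\<lambda>w. y w - p w) z = 0"
    using insert.IH[OF _ sub0] insert.prems(1) by auto
  have SS: "S \<subseteq> vecs (insert w W)" and S0: "(\<lambda>_. 0) \<in> S"
    and Sadd: "\<And>x y. x\<in>S \<Longrightarrow> y\<in>S \<Longrightarrow> (\<lambda>w. x w + y w) \<in> S"
    and Ssc: "\<And>a x. x\<in>S \<Longrightarrow> (\<lambda>w. a * x w) \<in> S"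
    using insert.prems(2) unfolding subsp_def by auto
  have Sdiff: "(\<lambda>w. x w - y w) \<in> S" if "x\<in>S" "y\<in>S" for x y
    using Sadd[OF that(1) Ssc[OF that(2), of "-1"]] by simp
  show ?case
  proof (cases "\<forall>x\<in>S. x w = 0")
    case True
    then have "S0 = S" unfolding S0_def by auto
    then show ?thesis using IH by simp
  next
    case False
    then obtain s where s: "s \<in> S" "s w \<noteq> 0" by auto
    obtain q where q: "q \<in> S0" "\<And>z. z\<in>S0 \<Longrightarrow> inner_V V (\<lambda>w. s w - q w) z = 0" using IH by blast
    obtain p0 where p0: "p0 \<in> S0" "\<And>z. z\<in>S0 \<Longrightarrow> inner_V V (\<lambda>w. y w - p0 w) z = 0" using IH by blast
    define r where "r = (\<lambda>w. s w - q w)"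
    have qS: "q \<in> S" "q w = 0" using q(1) unfolding S0_def by auto
    have p0S: "p0 \<in> S" using p0(1) unfolding S0_def by auto
    have rS: "r \<in> S" unfolding r_def using Sdiff[OF s(1) qS(1)] .
    have rw: "r w \<noteq> 0" using s qS unfolding r_def by simp
    have rr: "inner_V V r r > 0" using inner_self_pos[OF assms(1), of w r] rw insert.prems(1) by auto
    have rorth: "inner_V V r z = 0" if "z \<in> S0" for z using q(2)[OF that] unfolding r_def .
    define \<beta> where "\<beta> = inner_V V y r / inner_V V r r"
    define p where "p = (\<lambda>w. p0 w + \<beta> * r w)"
    have pS: "p \<in> S" unfolding p_def using Sadd[OF p0S Ssc[OF rS]] .
    have o1: "inner_V V (\<lambda>w. y w - p w) z = 0" if "z \<in> S0" for z
    proof -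
      have "(\<lambda>w. y w - p w) = (\<lambda>w. (y w - p0 w) - \<beta> * r w)" unfolding p_def by (auto simp: algebra_simps)
      then show ?thesis using p0(2)[OF that] rorth[OF that]
        by (simp add: inner_diff_left inner_scale_left)
    qed
    have o2: "inner_V V (\<lambda>w. y w - p w) r = 0"
    proof -
      have "(\<lambda>w. y w - p w) = (\<lambda>w. (y w - p0 w) - \<beta> * r w)" unfolding p_def by (auto simp: algebra_simps)
      moreover have "inner_V V p0 r = 0" using rorth[OF p0(1)] by (simp add: inner_commute)
      moreover have "\<beta> * inner_V V r r = inner_V V y r" unfolding \<beta>_def using rr by simp
      ultimately show ?thesis
        by (simp add: inner_diff_left inner_scale_left)
    qed
    have o3: "inner_V V (\<lambda>w. y w - p w) s = 0"
    proof -
      have "s = (\<lambda>w. r w + q w)" unfolding r_def by simp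
      then show ?thesis using o1[OF q(1)] o2 by (simp add: inner_add_right)
    qed
    show ?thesis
    proof (intro bexI[OF _ pS] ballI)
      fix z assume z: "z \<in> S"
      define a where "a = z w / s w"
      define z1 where "z1 = (\<lambda>v. z v - a * s v)"
      have z1: "z1 \<in> S0" unfolding S0_def z1_def a_def using Sdiff[OF z Ssc[OF s(1)], of "z w / s w"] s(2) by auto
      have zeq: "z = (\<lambda>v. z1 v + a * s v)" unfolding z1_def by simp
      have "inner_V V (\<lambda>w. y w - p w) (\<lambda>v. z1 v + a * s v) = 0"
        by (simp only: inner_add_right inner_scale_right o1[OF z1] o3 mult_zero_right add_0)
      with zeq show "inner_V V (\<lambda>w. y w - p w) z = 0" by simp
    qed
  qed
qed

lemma proj_unique:
  assumes "finite V" "subsp V S" "p \<in> S" "p' \<in> S"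
    "\<forall>z\<in>S. inner_V V (\<lambda>w. y w - p w) z = 0" "\<forall>z\<in>S. inner_V V (\<lambda>w. y w - p' w) z = 0"
  shows "p = p'"
proof -
  have Sadd: "\<And>x y. x\<in>S \<Longrightarrow> y\<in>S \<Longrightarrow> (\<lambda>w. x w + y w) \<in> S"
    and Ssc: "\<And>a x. x\<in>S \<Longrightarrow> (\<lambda>w. a * x w) \<in> S" and SV: "S \<subseteq> vecs V"
    using assms(2) unfolding subsp_def by auto
  define d where "d = (\<lambda>w. p w - p' w)"
  have dS: "d \<in> S" unfolding d_def using Sadd[OF assms(3) Ssc[OF assms(4), of "-1"]] by simp
  have e1: "inner_V V (\<lambda>w. (y w - p' w) - (y w - p w)) d = inner_V V (\<lambda>w. y w - p' w) d - inner_V V (\<lambda>w. y w - p w) d"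
    by (rule inner_diff_left)
  have e2: "(\<lambda>w. (y w - p' w) - (y w - p w)) = d" unfolding d_def by auto
  have "inner_V V (\<lambda>w. y w - p' w) d = 0" using assms(6) dS by blast
  moreover have "inner_V V (\<lambda>w. y w - p w) d = 0" using assms(5) dS by blast
  ultimately have "inner_V V d d = 0" using e1 unfolding e2 by linarith
  then have d0: "d = (\<lambda>_. 0)" using inner_self_zero[OF assms(1)] dS SV by auto
  show ?thesis
  proof
    fix w show "p w = p' w" using fun_cong[OF d0, of w] unfolding d_def by simp
  qed
qed

lemma lap_mult_add: "lap_mult V E (\<lambda>w. x w + y w) = (\<lambda>w. lap_mult V E x w + lap_mult V E y w)"
  by (rule ext) (simp add: lap_mult_def sum.distrib distrib_left)
lemma lap_mult_scale: "lap_mult V E (\<lambda>w. a * x w) = (\<lambda>w. a * lap_mult V E x w)"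
  by (rule ext) (simp add: lap_mult_def sum_distrib_left mult.left_commute)

lemma subsp_eigen: "subsp V (eigenspace_L V E c)"
proof -
  have z: "lap_mult V E (\<lambda>_. 0) = (\<lambda>_. 0)" by (rule ext) (simp add: lap_mult_def)
  have a: "(\<lambda>w. x w + y w) \<in> eigenspace_L V E c" if "x \<in> eigenspace_L V E c" "y \<in> eigenspace_L V E c" for x y
  proof -
    have "lap_mult V E (\<lambda>w. x w + y w) = (\<lambda>w. c * (x w + y w))"
      using that unfolding eigenspace_L_def lap_mult_add by (simp add: distrib_left)
    moreover have "(\<lambda>w. x w + y w) \<in> vecs V" using that unfolding eigenspace_L_def vecs_def by simp
    ultimately show ?thesis unfolding eigenspace_L_def by simp
  qed
  have m: "(\<lambda>w. a * x w) \<in> eigenspace_L V E c" if "x \<in> eigenspace_L V E c" for a x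
  proof -
    have "lap_mult V E (\<lambda>w. a * x w) = (\<lambda>w. c * (a * x w))"
      using that unfolding eigenspace_L_def lap_mult_scale by (simp add: mult.left_commute)
    moreover have "(\<lambda>w. a * x w) \<in> vecs V" using that unfolding eigenspace_L_def vecs_def by simp
    ultimately show ?thesis unfolding eigenspace_L_def by simp
  qed
  have "(\<lambda>_. 0) \<in> eigenspace_L V E c" unfolding eigenspace_L_def vecs_def using z by simp
  then show ?thesis unfolding subsp_def using a m by (auto simp: eigenspace_L_def)
qed

lemma eigproj_prop:
  assumes "finite V"
  shows "eigproj V E c y \<in> eigenspace_L V E c \<and>
    (\<forall>z\<in>eigenspace_L V E c. inner_V V (\<lambda>w. y w - eigproj V E c y w) z = 0)"
proof -
  obtain p where p: "p \<in> eigenspace_L V E c" "\<forall>z\<in>eigenspace_L V E c. inner_V V (\<lambda>w. y w - p w) z = 0"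
    using proj_exists_aux[OF assms assms order_refl subsp_eigen] by blast
  let ?P = "\<lambda>p. p \<in> eigenspace_L V E c \<and> (\<forall>z\<in>eigenspace_L V E c. inner_V V (\<lambda>w. y w - p w) z = 0)"
  have "?P p" using p by blast
  moreover have "p' = p" if "?P p'" for p'
    by (rule proj_unique[OF assms subsp_eigen]) (use p that in auto)
  ultimately have "?P (THE p. ?P p)" by (rule theI)
  then show ?thesis unfolding eigproj_def .
qed

lemma eigproj_eq:
  assumes "finite V" "p \<in> eigenspace_L V E c"
    "\<forall>z\<in>eigenspace_L V E c. inner_V V (\<lambda>w. y w - p w) z = 0"
  shows "eigproj V E c y = p"
  using proj_unique[OF assms(1) subsp_eigen _ assms(2) _ assms(3)] eigproj_prop[OF assms(1)] by blast

lemma eigproj_trivial: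
  assumes "finite V" "\<forall>x\<in>eigenspace_L V E c. x = (\<lambda>_. 0)"
  shows "eigproj V E c y = (\<lambda>_. 0)"
  using assms eigproj_prop[OF assms(1), of E c y] by auto

lemma eigproj_nonzero:
  assumes "finite V" "u \<in> V" "x \<in> eigenspace_L V E c" "x u \<noteq> 0"
  shows "eigproj V E c (unit_vec u) \<noteq> (\<lambda>_. 0)"
proof
  assume "eigproj V E c (unit_vec u) = (\<lambda>_. 0)"
  then have "inner_V V (unit_vec u) x = 0" using eigproj_prop[OF assms(1), of E c "unit_vec u"] assms(3)
    by auto
  moreover have "inner_V V (unit_vec u) x = (\<Sum>w\<in>V. if w = u then x w else 0)"
    unfolding inner_V_def unit_vec_def by (intro sum.cong) auto
  then have "inner_V V (unit_vec u) x = x u" using assms(1,2) by (simp add: sum.delta')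
  ultimately show False using assms(4) by simp
qed

lemma support_iff:
  assumes "finite V"
  shows "c \<notin> eig_support V E u \<longleftrightarrow> eigproj V E c (unit_vec u) = (\<lambda>_. 0)"
  using eigproj_prop[OF assms, of E c "unit_vec u"]
  unfolding eig_support_def is_L_eigenvalue_def by auto

lemma lap_regular:
  assumes "simple_graph V E" "regular V E d" "v \<in> V"
  shows "lap_mult V E x v = real d * x v - (\<Sum>w\<in>{w\<in>V. E v w}. x w)"
proof -
  have fin: "finite V" using assms(1) by (simp add: simple_graph_def)
  have deg: "degree V E v = d" using assms(2,3) by (simp add: regular_def)
  have "lap_mult V E x v = (\<Sum>w\<in>V. (if v = w then real d * x w else 0) - (if E v w then x w else 0))"
    using assms(3) deg unfolding lap_mult_def laplacian_def by (simp, intro sum.cong) (auto simp: algebra_simps)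
  also have "\<dots> = (\<Sum>w\<in>V. (if v = w then real d * x w else 0)) - (\<Sum>w\<in>V. (if E v w then x w else 0))"
    by (simp add: sum_subtractf)
  also have "\<dots> = real d * x v - (\<Sum>w\<in>{w\<in>V. E v w}. x w)"
    using fin assms(3) by (simp add: sum.inter_filter)
  finally show ?thesis .
qed

lemma bl_simple: "simple_graph V E \<Longrightarrow> simple_graph (blowup2_V V) (blowup2_E E)"
  unfolding simple_graph_def blowup2_V_def blowup2_E_def by auto

lemma bl_nbrs: "l \<in> {0,1} \<Longrightarrow> simple_graph V E \<Longrightarrow>
  {p\<in>blowup2_V V. blowup2_E E (l,v) p} = {0,1} \<times> {w\<in>V. E v w}"
  unfolding simple_graph_def blowup2_V_def blowup2_E_def by auto

lemma bl_regular:
  assumes "simple_graph V E" "regular V E d"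
  shows "regular (blowup2_V V) (blowup2_E E) (2*d)"
  unfolding regular_def
proof
  fix p assume p: "p \<in> blowup2_V V"
  obtain l v where lv: "p = (l,v)" "l \<in> {0,1}" "v \<in> V" using p unfolding blowup2_V_def by auto
  have fin: "finite V" using assms(1) by (simp add: simple_graph_def)
  have "degree (blowup2_V V) (blowup2_E E) p = card ({0::nat,1} \<times> {w\<in>V. E v w})"
    unfolding degree_def lv(1) using bl_nbrs[OF lv(2) assms(1)] by simp
  also have "\<dots> = 2 * card {w\<in>V. E v w}" using fin by (simp add: card_cartesian_product)
  also have "\<dots> = 2 * d" using assms(2) lv by (simp add: regular_def degree_def)
  finally show "degree (blowup2_V V) (blowup2_E E) p = 2 * d" .
qed

lemma bl_lap:
  assumes "simple_graph V E" "regular V E d" "l \<in> {0,1}" "v \<in> V"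
  shows "lap_mult (blowup2_V V) (blowup2_E E) x (l,v)
     = 2 * real d * x (l,v) - (\<Sum>w\<in>{w\<in>V. E v w}. x (0,w) + x (1,w))"
proof -
  have fin: "finite V" using assms(1) by (simp add: simple_graph_def)
  have "(l,v) \<in> blowup2_V V" using assms by (simp add: blowup2_V_def)
  then have "lap_mult (blowup2_V V) (blowup2_E E) x (l,v)
     = real (2*d) * x (l,v) - (\<Sum>p\<in>{0::nat,1} \<times> {w\<in>V. E v w}. x p)"
    using lap_regular[OF bl_simple[OF assms(1)] bl_regular[OF assms(1,2)]] bl_nbrs[OF assms(3,1)]
    by simp
  also have "(\<Sum>p\<in>{0::nat,1} \<times> {w\<in>V. E v w}. x p) = (\<Sum>m\<in>{0::nat,1}. \<Sum>w\<in>{w\<in>V. E v w}. x (m,w))"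
    by (rule sum.cartesian_product')
  also have "\<dots> = (\<Sum>w\<in>{w\<in>V. E v w}. x (0,w) + x (1,w))" by (simp add: sum.distrib)
  finally show ?thesis by simp
qed

lemma bl_inner:
  "inner_V (blowup2_V V) f g = (\<Sum>v\<in>V. f (0,v) * g (0,v) + f (1,v) * g (1,v))"
proof -
  have "inner_V (blowup2_V V) f g = (\<Sum>m\<in>{0::nat,1}. \<Sum>v\<in>V. f (m,v) * g (m,v))"
    unfolding inner_V_def blowup2_V_def by (rule sum.cartesian_product')
  then show ?thesis by (simp add: sum.distrib)
qed

definition Qf :: "'a set \<Rightarrow> ('a\<Rightarrow>'a\<Rightarrow>bool) \<Rightarrow> nat \<Rightarrow> 'a \<Rightarrow> nat \<Rightarrow> real \<Rightarrow> nat \<times> 'a \<Rightarrow> real" where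
 "Qf V E d u k c = (\<lambda>(l,v). if l \<in> {0,1} \<and> v \<in> V then eigproj V E (c/2) (unit_vec u) v / 2
     + (if c = 2 * real d then (if l = k then unit_vec u v / 2 else - unit_vec u v / 2) else 0) else 0)"

lemma bl_eig_sum:
  assumes G: "simple_graph V E" "regular V E d"
    and z: "z \<in> eigenspace_L (blowup2_V V) (blowup2_E E) c"
  shows "(\<lambda>v. z (0,v) + z (1,v)) \<in> eigenspace_L V E (c/2)"
    and "c \<noteq> 2 * real d \<Longrightarrow> v \<in> V \<Longrightarrow> z (0,v) = z (1,v)"
proof -
  define s where "s = (\<lambda>v. z (0,v) + z (1,v))"
  have zv: "z \<in> vecs (blowup2_V V)" and zl: "lap_mult (blowup2_V V) (blowup2_E E) z = (\<lambda>p. c * z p)"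
    using z unfolding eigenspace_L_def by auto
  have eq: "2 * real d * z (l,v) - (\<Sum>w\<in>{w\<in>V. E v w}. s w) = c * z (l,v)" if "l \<in> {0,1}" "v \<in> V" for l v
    using bl_lap[OF G that, of z] fun_cong[OF zl, of "(l,v)"] unfolding s_def by simp
  have sv: "s \<in> vecs V" using zv unfolding vecs_def s_def blowup2_V_def by auto
  have "lap_mult V E s = (\<lambda>v. c / 2 * s v)"
  proof
    fix v show "lap_mult V E s v = c / 2 * s v"
    proof (cases "v \<in> V")
      case True
      show ?thesis using lap_regular[OF G True, of s] eq[of 0 v] eq[of 1 v] True
        unfolding s_def by (simp add: algebra_simps)
    next
      case False then show ?thesis using sv by (simp add: lap_mult_def vecs_def)
    qed
  qed
  then show "(\<lambda>v. z (0,v) + z (1,v)) \<in> eigenspace_L V E (c/2)"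
    using sv unfolding eigenspace_L_def s_def by simp
  assume "c \<noteq> 2 * real d" "v \<in> V"
  then show "z (0,v) = z (1,v)" using eq[of 0 v] eq[of 1 v]
  proof -
    have "(2 * real d - c) * (z (0,v) - z (1,v)) = 0" using eq[of 0 v] eq[of 1 v] \<open>v \<in> V\<close>
      by (simp add: algebra_simps)
    then show ?thesis using \<open>c \<noteq> 2 * real d\<close> by simp
  qed
qed

lemma bl_proj:
  assumes G: "simple_graph V E" "regular V E d" "u \<in> V" and k: "k \<in> {0,1}"
  shows "eigproj (blowup2_V V) (blowup2_E E) c (unit_vec (k,u)) = Qf V E d u k c"
proof (rule eigproj_eq)
  have fin: "finite V" using G(1) by (simp add: simple_graph_def)
  show "finite (blowup2_V V)" using fin by (simp add: blowup2_V_def)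
  define P where "P = eigproj V E (c/2) (unit_vec u)"
  have PE: "P \<in> eigenspace_L V E (c/2)"
    and Porth: "\<forall>z\<in>eigenspace_L V E (c/2). inner_V V (\<lambda>w. unit_vec u w - P w) z = 0"
    using eigproj_prop[OF fin] unfolding P_def by blast+
  have Pv: "P \<in> vecs V" and Pl: "lap_mult V E P = (\<lambda>v. c/2 * P v)" using PE by (auto simp: eigenspace_L_def)
  have Pnb: "(\<Sum>w\<in>{w\<in>V. E v w}. P w) = real d * P v - c/2 * P v" if "v \<in> V" for v
  proof -
    have "lap_mult V E P v = real d * P v - (\<Sum>w\<in>{w\<in>V. E v w}. P w)" by (rule lap_regular[OF G(1,2) that])
    moreover have "lap_mult V E P v = c/2 * P v" using fun_cong[OF Pl, of v] .
    ultimately show ?thesis by linarith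
  qed
  let ?Q = "Qf V E d u k c"
  have Qsum: "?Q (0,w) + ?Q (1,w) = P w" if "w \<in> V" for w
    using that k unfolding Qf_def P_def by auto
  have Qv: "?Q \<in> vecs (blowup2_V V)" unfolding vecs_def Qf_def blowup2_V_def by auto
  have "lap_mult (blowup2_V V) (blowup2_E E) ?Q = (\<lambda>p. c * ?Q p)"
  proof
    fix p show "lap_mult (blowup2_V V) (blowup2_E E) ?Q p = c * ?Q p"
    proof (cases "p \<in> blowup2_V V")
      case True
      then obtain l v where lv: "p = (l,v)" "l \<in> {0,1}" "v \<in> V" unfolding blowup2_V_def by auto
      have "lap_mult (blowup2_V V) (blowup2_E E) ?Q p = 2 * real d * ?Q (l,v) - (\<Sum>w\<in>{w\<in>V. E v w}. P w)"
        unfolding lv(1) bl_lap[OF G(1,2) lv(2,3)] using Qsum by (intro arg_cong2[where f="(-)"] refl sum.cong) auto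
      also have "\<dots> = c * ?Q (l,v)"
        unfolding Pnb[OF lv(3)] using lv(2,3) unfolding Qf_def P_def by (auto simp: algebra_simps)
      finally show ?thesis using lv(1) by simp
    next
      case False
      then have "?Q p = 0" using Qv unfolding vecs_def by blast
      then show ?thesis using False by (simp add: lap_mult_def)
    qed
  qed
  then show "?Q \<in> eigenspace_L (blowup2_V V) (blowup2_E E) c" using Qv unfolding eigenspace_L_def by simp
  show "\<forall>z\<in>eigenspace_L (blowup2_V V) (blowup2_E E) c.
     inner_V (blowup2_V V) (\<lambda>w. unit_vec (k, u) w - ?Q w) z = 0"
  proof
    fix z assume z: "z \<in> eigenspace_L (blowup2_V V) (blowup2_E E) c"
    define s where "s = (\<lambda>v. z (0,v) + z (1,v))"
    have sE: "s \<in> eigenspace_L V E (c/2)" using bl_eig_sum(1)[OF G(1,2) z] unfolding s_def .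
    have zz: "c \<noteq> 2 * real d \<Longrightarrow> v \<in> V \<Longrightarrow> z (0,v) = z (1,v)" for v using bl_eig_sum(2)[OF G(1,2) z] .
    have "inner_V (blowup2_V V) (\<lambda>w. unit_vec (k, u) w - ?Q w) z
       = (\<Sum>v\<in>V. (unit_vec u v - P v) / 2 * s v)"
      unfolding bl_inner
    proof (rule sum.cong[OF refl])
      fix v assume v: "v \<in> V"
      show "(unit_vec (k, u) (0, v) - ?Q (0, v)) * z (0, v) + (unit_vec (k, u) (1, v) - ?Q (1, v)) * z (1, v)
         = (unit_vec u v - P v) / 2 * s v"
      proof (cases "c = 2 * real d")
        case True
        then show ?thesis using v k unfolding Qf_def P_def s_def unit_vec_def
          by (auto simp: algebra_simps)
      next
        case False
        then show ?thesis using v k zz[OF False v] unfolding Qf_def P_def s_def unit_vec_def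
          by (auto simp: algebra_simps)
      qed
    qed
    also have "\<dots> = inner_V V (\<lambda>w. unit_vec u w - P w) s / 2"
      unfolding inner_V_def by (simp add: sum_divide_distrib)
    also have "\<dots> = 0" using Porth sE by simp
    finally show "inner_V (blowup2_V V) (\<lambda>w. unit_vec (k, u) w - ?Q w) z = 0" .
  qed
qed

lemma part1:
  assumes G: "simple_graph V E" "regular V E d" "u \<in> V"
  shows "strongly_cospectral (blowup2_V V) (blowup2_E E) (0,u) (1,u) \<longleftrightarrow> real d \<notin> eig_support V E u"
proof -
  have fin: "finite V" using G(1) by (simp add: simple_graph_def)
  have fin2: "finite (blowup2_V V)" using fin by (simp add: blowup2_V_def)
  define Pd where "Pd = eigproj V E (real d) (unit_vec u)"
  have Pdv: "Pd \<in> vecs V" using eigproj_prop[OF fin, of E "real d" "unit_vec u"]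
    unfolding Pd_def eigenspace_L_def by auto
  have P0: "eigproj (blowup2_V V) (blowup2_E E) c (unit_vec (0,u)) = Qf V E d u 0 c" for c
    using bl_proj[OF G] by simp
  have P1: "eigproj (blowup2_V V) (blowup2_E E) c (unit_vec (1,u)) = Qf V E d u 1 c" for c
    using bl_proj[OF G] by simp
  have Qd: "Qf V E d u k (2 * real d) = (\<lambda>(l,v). if l \<in> {0,1} \<and> v \<in> V then Pd v / 2
     + (if l = k then unit_vec u v / 2 else - unit_vec u v / 2) else 0)" for k
  proof -
    have h: "2 * real d / 2 = real d" by simp
    show ?thesis unfolding Qf_def Pd_def h by (auto simp: fun_eq_iff)
  qed
  have Qne: "c \<noteq> 2 * real d \<Longrightarrow> Qf V E d u 0 c = Qf V E d u 1 c" for c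
    unfolding Qf_def by (auto simp: fun_eq_iff)
  show ?thesis
  proof
    assume sc: "strongly_cospectral (blowup2_V V) (blowup2_E E) (0,u) (1,u)"
    let ?c = "2 * real d"
    have "Qf V E d u 0 ?c \<noteq> (\<lambda>_. 0)"
    proof
      assume "Qf V E d u 0 ?c = (\<lambda>_. 0)"
      then have "Qf V E d u 0 ?c (0,u) = 0" "Qf V E d u 0 ?c (1,u) = 0" by auto
      then show False unfolding Qd using G(3) by (simp add: unit_vec_def)
    qed
    moreover have "Qf V E d u 0 ?c \<in> eigenspace_L (blowup2_V V) (blowup2_E E) ?c"
      using eigproj_prop[OF fin2] P0 by metis
    ultimately have "?c \<in> eig_support (blowup2_V V) (blowup2_E E) (0,u)"
      unfolding eig_support_def is_L_eigenvalue_def P0 by blast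
    then have "Qf V E d u 0 ?c = Qf V E d u 1 ?c \<or> Qf V E d u 0 ?c = (\<lambda>w. - Qf V E d u 1 ?c w)"
      using sc unfolding strongly_cospectral_def P0 P1 by blast
    then have "Pd = (\<lambda>_. 0)"
    proof
      assume "Qf V E d u 0 ?c = Qf V E d u 1 ?c"
      then have "Qf V E d u 0 ?c (0,u) = Qf V E d u 1 ?c (0,u)" by simp
      then show ?thesis unfolding Qd using G(3) by (simp add: unit_vec_def)
    next
      assume h: "Qf V E d u 0 ?c = (\<lambda>w. - Qf V E d u 1 ?c w)"
      show ?thesis
      proof
        fix v show "Pd v = 0"
        proof (cases "v \<in> V")
          case True
          then have "Qf V E d u 0 ?c (0,v) = - Qf V E d u 1 ?c (0,v)" using h by metis
          then show ?thesis unfolding Qd using True by simp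
        next
          case False then show ?thesis using Pdv by (simp add: vecs_def)
        qed
      qed
    qed
    then show "real d \<notin> eig_support V E u" using support_iff[OF fin] unfolding Pd_def by blast
  next
    assume "real d \<notin> eig_support V E u"
    then have Pd0: "Pd = (\<lambda>_. 0)" using support_iff[OF fin] unfolding Pd_def by blast
    show "strongly_cospectral (blowup2_V V) (blowup2_E E) (0,u) (1,u)"
      unfolding strongly_cospectral_def P0 P1
    proof
      fix c
      show "Qf V E d u 0 c = Qf V E d u 1 c \<or> Qf V E d u 0 c = (\<lambda>w. - Qf V E d u 1 c w)"
      proof (cases "c = 2 * real d")
        case True
        have "Qf V E d u 0 c = (\<lambda>w. - Qf V E d u 1 c w)"
          unfolding True Qd Pd0 by (auto simp: fun_eq_iff)
        then show ?thesis by blast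
      qed (simp add: Qne)
    qed
  qed
qed

lemma reduce:
  assumes "simple_graph V E" "regular V E d" "u \<in> V"
  shows "strongly_cospectral (blowup2_V V) (blowup2_E E) (0,u) (1,u)
     \<longleftrightarrow> eigproj V E (real d) (unit_vec u) = (\<lambda>_. 0)"
  using part1[OF assms] support_iff[of V] assms(1) by (simp add: simple_graph_def)

lemma eig_d_iff:
  assumes G: "simple_graph V E" "regular V E d"
  shows "x \<in> eigenspace_L V E (real d) \<longleftrightarrow> x \<in> vecs V \<and> (\<forall>v\<in>V. (\<Sum>w\<in>{w\<in>V. E v w}. x w) = 0)"
proof -
  have "lap_mult V E x = (\<lambda>v. real d * x v) \<longleftrightarrow> (\<forall>v\<in>V. (\<Sum>w\<in>{w\<in>V. E v w}. x w) = 0)"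
    if "x \<in> vecs V"
  proof
    assume h: "lap_mult V E x = (\<lambda>v. real d * x v)"
    show "\<forall>v\<in>V. (\<Sum>w\<in>{w\<in>V. E v w}. x w) = 0"
      using lap_regular[OF G, of _ x] fun_cong[OF h] by fastforce
  next
    assume h: "\<forall>v\<in>V. (\<Sum>w\<in>{w\<in>V. E v w}. x w) = 0"
    show "lap_mult V E x = (\<lambda>v. real d * x v)"
    proof
      fix v show "lap_mult V E x v = real d * x v"
        using lap_regular[OF G, of v x] h that by (cases "v \<in> V") (auto simp: lap_mult_def vecs_def)
    qed
  qed
  then show ?thesis unfolding eigenspace_L_def by blast
qed

lemma complete_simple: "simple_graph (complete_V n) (complete_E n)"
  unfolding simple_graph_def complete_V_def complete_E_def by auto

lemma complete_nbrs: "v < n \<Longrightarrow> {w\<in>complete_V n. complete_E n v w} = {0..<n} - {v}"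
  unfolding complete_V_def complete_E_def by auto

lemma complete_regular: "regular (complete_V (Suc d)) (complete_E (Suc d)) d"
  unfolding regular_def degree_def
proof
  fix v assume "v \<in> complete_V (Suc d)"
  then have "v < Suc d" by (simp add: complete_V_def)
  then show "card {w \<in> complete_V (Suc d). complete_E (Suc d) v w} = d"
    using complete_nbrs[of v "Suc d"] by simp
qed

lemma part2:
  assumes "d \<ge> 1" "u \<in> complete_V (d + 1)"
  shows "strongly_cospectral (blowup2_V (complete_V (d + 1))) (blowup2_E (complete_E (d + 1))) (0, u) (1, u)"
proof -
  let ?V = "complete_V (Suc d)" and ?E = "complete_E (Suc d)"
  have fin: "finite ?V" by (simp add: complete_V_def)
  have "eigproj ?V ?E (real d) (unit_vec u) = (\<lambda>_. 0)"
  proof (rule eigproj_trivial[OF fin], intro ballI)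
    fix x assume "x \<in> eigenspace_L ?V ?E (real d)"
    then have xv: "x \<in> vecs ?V" and xs: "\<And>v. v < Suc d \<Longrightarrow> (\<Sum>w\<in>{0..<Suc d} - {v}. x w) = 0"
      using eig_d_iff[OF complete_simple complete_regular] complete_nbrs
      by (auto simp: complete_V_def)
    define T where "T = (\<Sum>w\<in>{0..<Suc d}. x w)"
    have xT: "x v = T" if "v < Suc d" for v
      using sum.remove[of "{0..<Suc d}" v x] xs[OF that] that unfolding T_def by simp
    have "(\<Sum>w\<in>{0..<Suc d} - {0}. x w) = (\<Sum>w\<in>{0..<Suc d} - {0}. T)"
      using xT by (intro sum.cong) auto
    then have "real d * T = 0" using xs[of 0] by simp
    then have T0: "T = 0" using assms(1) by simp
    show "x = (\<lambda>_. 0)"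
    proof
      fix v show "x v = 0"
        using xT[of v] T0 xv by (cases "v < Suc d") (auto simp: vecs_def complete_V_def)
    qed
  qed
  then show ?thesis using reduce[OF complete_simple complete_regular] assms(2) by simp
qed

lemma succ_eq: "(v::nat) < n \<Longrightarrow> (v+1) mod n = (if v + 1 = n then 0 else v + 1)"
  by (cases "v + 1 = n") auto
lemma pred_eq: "(v::nat) < n \<Longrightarrow> (v+n-1) mod n = (if v = 0 then n - 1 else v - 1)"
proof (cases "v = 0")
  case False
  assume "v < n"
  then have "v + n - 1 = (v - 1) + n" using False by linarith
  then have "(v + n - 1) mod n = ((v - 1) + n) mod n" by simp
  also have "\<dots> = v - 1" using \<open>v < n\<close> by simp
  finally show ?thesis using False by simp
qed simp

lemma cycle_simple: "simple_graph (cycle_V n) (cycle_E n)"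
  unfolding simple_graph_def cycle_V_def cycle_E_def by auto

lemma cycle_E_iff:
  assumes "n \<ge> 3" "v < n" "w < n"
  shows "cycle_E n v w \<longleftrightarrow> w = (v+1) mod n \<or> w = (v+n-1) mod n"
  unfolding cycle_E_def using assms succ_eq[of v n] succ_eq[of w n] pred_eq[of v n]
  by (auto split: if_splits)

lemma cycle_nbrs:
  assumes "n \<ge> 3" "v < n"
  shows "{w\<in>cycle_V n. cycle_E n v w} = {(v+1) mod n, (v+n-1) mod n}"
  using cycle_E_iff[OF assms(1,2)] assms unfolding cycle_V_def by auto

lemma cycle_sp: "n \<ge> 3 \<Longrightarrow> (v::nat) < n \<Longrightarrow> (v+1) mod n \<noteq> (v+n-1) mod n"
  using succ_eq[of v n] pred_eq[of v n] by (auto split: if_splits)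

lemma cycle_regular: "n \<ge> 3 \<Longrightarrow> regular (cycle_V n) (cycle_E n) 2"
  unfolding regular_def degree_def
  using cycle_nbrs cycle_sp by (auto simp: cycle_V_def)

lemma cycle_eig:
  assumes "n \<ge> 3"
  shows "x \<in> eigenspace_L (cycle_V n) (cycle_E n) 2 \<longleftrightarrow> x \<in> vecs (cycle_V n)
    \<and> (\<forall>v<n. x ((v+1) mod n) + x ((v+n-1) mod n) = 0)"
proof -
  have "(\<forall>v\<in>cycle_V n. (\<Sum>w\<in>{w\<in>cycle_V n. cycle_E n v w}. x w) = 0)
     \<longleftrightarrow> (\<forall>v<n. x ((v+1) mod n) + x ((v+n-1) mod n) = 0)"
  proof -
    have "(\<Sum>w\<in>{w\<in>cycle_V n. cycle_E n v w}. x w) = x ((v+1) mod n) + x ((v+n-1) mod n)" if "v < n" for v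
      using cycle_nbrs[OF assms that] cycle_sp[OF assms that] by simp
    then show ?thesis by (auto simp: cycle_V_def)
  qed
  then show ?thesis using eig_d_iff[OF cycle_simple cycle_regular[OF assms], of x] by simp
qed

lemma cycle_zero:
  assumes n: "n \<ge> 3" "n mod 4 \<noteq> 0" and x: "\<forall>v<n. x ((v+1) mod n) + x ((v+n-1) mod n) = 0"
    and v: "v < n"
  shows "(x::nat\<Rightarrow>real) v = 0"
proof -
  have step: "x ((a+2) mod n) = - x a" if "a < n" for a
  proof -
    define b where "b = (a+1) mod n"
    have b: "b < n" unfolding b_def using n by simp
    have "(b+1) mod n = (a+2) mod n" unfolding b_def by (simp add: mod_Suc_eq)
    moreover have "(b+n-1) mod n = a" unfolding b_def using that succ_eq[of a n] pred_eq[of 0 n] n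
      by (auto split: if_splits)
    ultimately show ?thesis using x b by force
  qed
  have iter: "x ((v + 2*k) mod n) = (-1)^k * x v" for k
  proof (induction k)
    case 0 then show ?case using v by simp
  next
    case (Suc k)
    have "((v + 2*k) mod n + 2) mod n = (v + 2*k + 2) mod n" by (rule mod_add_left_eq)
    then have "(v + 2 * Suc k) mod n = ((v + 2*k) mod n + 2) mod n" by simp
    then show ?case using step[of "(v + 2*k) mod n"] Suc n by simp
  qed
  show ?thesis
  proof (cases "even n")
    case False
    have "(v + 2*n) mod n = v" using v by simp
    then have "x v = (-1)^n * x v" using iter[of n] by simp
    then show ?thesis using False by simp
  next
    case True
    then have "odd (n div 2)" using n(2) by presburger
    moreover have "(v + 2*(n div 2)) mod n = v" using v True by simp
    ultimately have "x v = - x v" using iter[of "n div 2"] by simp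
    then show ?thesis by simp
  qed
qed

lemma mod4_shift: "(a::nat) = b + 4*k \<Longrightarrow> a mod 4 = b mod 4" by simp
lemma mod4_in: "((x::nat) mod 4 + j) mod 4 = (x + j) mod 4" by (simp add: mod_add_left_eq)

lemma cyc_s0: assumes v: "(v::nat) < n" and u: "u < n" and m: "n = 4*m"
  shows "((v+1) mod n + n - u) mod 4 = (v + n - u + 1) mod 4"
proof (cases "v + 1 = n")
  case True
  have e1: "(v+1) mod n + n - u = n - u" using True by simp
  have e2: "v + n - u + 1 = (n - u) + 4*m" using True u m by linarith
  show ?thesis unfolding e1 e2 by (rule sym, rule mod4_shift[of _ _ m], rule refl)
next
  case False
  have "(v+1) mod n = v + 1" using succ_eq[OF v] False by simp
  moreover have "v + 1 + n - u = v + n - u + 1" using u by linarith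
  ultimately show ?thesis by simp
qed

lemma cyc_p0: assumes v: "(v::nat) < n" and u: "u < n" and m: "n = 4*m"
  shows "((v+n-1) mod n + n - u) mod 4 = (v + n - u + 3) mod 4"
proof (cases "v = 0")
  case True
  have m1: "m \<ge> 1" using m u by simp
  have e1: "(v+n-1) mod n + n - u = (v + n - u + 3) + 4*(m-1)"
    using pred_eq[OF v] True u m m1 by simp
  show ?thesis unfolding e1 by (rule mod4_shift, rule refl)
next
  case False
  have e1: "v + n - u + 3 = ((v+n-1) mod n + n - u) + 4 * 1"
    using pred_eq[OF v] False u by simp
  show ?thesis unfolding e1 by (rule sym, rule mod4_shift, rule refl)
qed

definition hh :: "nat \<Rightarrow> real" where "hh r = (if r = 0 then 1 else if r = 2 then -1 else 0)"

lemma hh_sum: "(r::nat) < 4 \<Longrightarrow> hh ((r+1) mod 4) + hh ((r+3) mod 4) = 0"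
proof -
  assume "r < 4"
  then have "r = 0 \<or> r = 1 \<or> r = 2 \<or> r = 3" by auto
  then show ?thesis by (elim disjE) (simp_all add: hh_def)
qed

lemma part3:
  assumes "n \<ge> 3" "u \<in> cycle_V n"
  shows "strongly_cospectral (blowup2_V (cycle_V n)) (blowup2_E (cycle_E n)) (0, u) (1, u)
               \<longleftrightarrow> n mod 4 \<noteq> 0"
proof -
  have fin: "finite (cycle_V n)" by (simp add: cycle_V_def)
  have u: "u < n" using assms(2) by (simp add: cycle_V_def)
  have red: "strongly_cospectral (blowup2_V (cycle_V n)) (blowup2_E (cycle_E n)) (0, u) (1, u)
     \<longleftrightarrow> eigproj (cycle_V n) (cycle_E n) 2 (unit_vec u) = (\<lambda>_. 0)"
    using reduce[OF cycle_simple cycle_regular[OF assms(1)] assms(2)] by simp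
  show ?thesis
  proof (cases "n mod 4 = 0")
    case False
    have "eigproj (cycle_V n) (cycle_E n) 2 (unit_vec u) = (\<lambda>_. 0)"
    proof (rule eigproj_trivial[OF fin], intro ballI ext)
      fix x v assume x: "x \<in> eigenspace_L (cycle_V n) (cycle_E n) 2"
      show "x v = 0"
      proof (cases "v < n")
        case True
        have "\<forall>v<n. x ((v+1) mod n) + x ((v+n-1) mod n) = 0" using x cycle_eig[OF assms(1)] by simp
        then show ?thesis using cycle_zero[OF assms(1) False _ True, of x] by simp
      next
        case False
        have "x \<in> vecs (cycle_V n)" using x cycle_eig[OF assms(1)] by simp
        then show ?thesis using False unfolding vecs_def cycle_V_def by simp
      qed
    qed
    then show ?thesis using red False by simp
  next
    case True
    define g where "g = (\<lambda>v. if v < n then hh ((v + n - u) mod 4) else 0)"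
    have "g \<in> eigenspace_L (cycle_V n) (cycle_E n) 2"
      unfolding cycle_eig[OF assms(1)]
    proof
      show "g \<in> vecs (cycle_V n)" unfolding g_def vecs_def cycle_V_def by simp
      show "\<forall>v<n. g ((v + 1) mod n) + g ((v + n - 1) mod n) = 0"
      proof (intro allI impI)
        fix v assume v: "v < n"
        obtain m where m: "n = 4*m" using True by (metis dvd_def mod_0_imp_dvd)
        have s0: "((v+1) mod n + n - u) mod 4 = (v + n - u + 1) mod 4" by (rule cyc_s0[OF v u m])
        have s: "((v+1) mod n + n - u) mod 4 = ((v + n - u) mod 4 + 1) mod 4"
          unfolding mod4_in by (rule s0)
        have p0: "((v+n-1) mod n + n - u) mod 4 = (v + n - u + 3) mod 4" by (rule cyc_p0[OF v u m])
        have p: "((v+n-1) mod n + n - u) mod 4 = ((v + n - u) mod 4 + 3) mod 4"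
          unfolding mod4_in by (rule p0)
        have "(v + n - u) mod 4 < 4" by simp
        then have "hh (((v + n - u) mod 4 + 1) mod 4) + hh (((v + n - u) mod 4 + 3) mod 4) = 0"
          by (rule hh_sum)
        moreover have "g ((v + 1) mod n) = hh (((v + n - u) mod 4 + 1) mod 4)"
          unfolding g_def using s \<open>n \<ge> 3\<close> by simp
        moreover have "g ((v + n - 1) mod n) = hh (((v + n - u) mod 4 + 3) mod 4)"
          unfolding g_def using p \<open>n \<ge> 3\<close> by simp
        ultimately show "g ((v + 1) mod n) + g ((v + n - 1) mod n) = 0" by simp
      qed
    qed
    moreover have "g u \<noteq> 0" unfolding g_def hh_def using u True by (simp add: mod_add_left_eq)
    ultimately have "eigproj (cycle_V n) (cycle_E n) 2 (unit_vec u) \<noteq> (\<lambda>_. 0)"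
      by (rule eigproj_nonzero[OF fin assms(2)])
    then show ?thesis using red True by simp
  qed
qed

definition sd :: "nat \<Rightarrow> nat set \<Rightarrow> nat set" where
  "sd i A = (if i \<in> A then A - {i} else insert i A)"

lemma sd_sd[simp]: "sd i (sd i A) = A" unfolding sd_def by auto
lemma sd_comm: "sd i (sd j A) = sd j (sd i A)" unfolding sd_def by auto
lemma symdiff_sd: "(A - sd i A) \<union> (sd i A - A) = {i}" unfolding sd_def by auto
lemma sd_sub: "A \<subseteq> {0..<d} \<Longrightarrow> i < d \<Longrightarrow> sd i A \<subseteq> {0..<d}" unfolding sd_def by auto
lemma sd_inj: "inj_on (\<lambda>i. sd i A) X"
proof
  fix i j assume "sd i A = sd j A"
  have "{i} = (A - sd i A) \<union> (sd i A - A)" by (rule symdiff_sd[symmetric])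
  also have "\<dots> = (A - sd j A) \<union> (sd j A - A)" unfolding \<open>sd i A = sd j A\<close> ..
  also have "\<dots> = {j}" by (rule symdiff_sd)
  finally show "i = j" by simp
qed

lemma symdiff_eq: assumes i: "(A - B) \<union> (B - A) = {i}" shows "B = sd i A"
proof -
  have mem: "(y \<in> A \<and> y \<notin> B \<or> y \<in> B \<and> y \<notin> A) \<longleftrightarrow> y = i" for y
    using i[unfolded set_eq_iff, rule_format, of y] by simp
  show ?thesis
  proof (rule set_eqI)
    fix y show "y \<in> B \<longleftrightarrow> y \<in> sd i A"
      using mem[of y] unfolding sd_def by (cases "i \<in> A") auto
  qed
qed

lemma cube_simple: "simple_graph (cube_V d) (cube_E d)"
proof -
  have "card ((B - A) \<union> (A - B)) = card ((A - B) \<union> (B - A))" for A B :: "nat set"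
    by (simp add: Un_commute)
  then show ?thesis unfolding simple_graph_def cube_E_def cube_V_def by auto
qed

lemma cube_E_iff:
  assumes "A \<in> cube_V d"
  shows "cube_E d A B \<longleftrightarrow> (\<exists>i<d. B = sd i A)"
proof
  assume h: "cube_E d A B"
  then have B: "B \<subseteq> {0..<d}" and c: "card ((A - B) \<union> (B - A)) = 1" by (auto simp: cube_E_def cube_V_def)
  obtain i where i: "(A - B) \<union> (B - A) = {i}" using c card_1_singletonE by blast
  have "B = sd i A" using symdiff_eq[OF i] .
  moreover have "i \<in> A \<union> B" using i by blast
  then have "i < d" using B assms unfolding cube_V_def by auto
  ultimately show "\<exists>i<d. B = sd i A" by blast
next
  assume "\<exists>i<d. B = sd i A"
  then obtain i where i: "i < d" "B = sd i A" by blast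
  have A: "A \<subseteq> {0..<d}" using assms by (simp add: cube_V_def)
  have "B \<subseteq> {0..<d}" using sd_sub[OF A i(1)] i(2) by simp
  moreover have "card ((A - B) \<union> (B - A)) = 1" unfolding i(2) symdiff_sd by simp
  ultimately show "cube_E d A B" using assms unfolding cube_E_def cube_V_def by simp
qed

lemma cube_nbrs:
  assumes "A \<in> cube_V d"
  shows "{B\<in>cube_V d. cube_E d A B} = (\<lambda>i. sd i A) ` {0..<d}"
proof (intro set_eqI iffI)
  fix B assume "B \<in> {B\<in>cube_V d. cube_E d A B}"
  then show "B \<in> (\<lambda>i. sd i A) ` {0..<d}" using cube_E_iff[OF assms] by auto
next
  fix B assume "B \<in> (\<lambda>i. sd i A) ` {0..<d}"
  then obtain i where i: "i < d" "B = sd i A" by auto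
  have "B \<in> cube_V d" using sd_sub[of A d i] i assms unfolding cube_V_def by auto
  then show "B \<in> {B\<in>cube_V d. cube_E d A B}" using cube_E_iff[OF assms] i by auto
qed

lemma cube_regular: "regular (cube_V d) (cube_E d) d"
  unfolding regular_def degree_def
  using cube_nbrs card_image[OF sd_inj] by simp

lemma cube_sum:
  assumes "A \<in> cube_V d"
  shows "(\<Sum>B\<in>{B\<in>cube_V d. cube_E d A B}. x B) = (\<Sum>i\<in>{0..<d}. x (sd i A))"
  unfolding cube_nbrs[OF assms] by (simp add: sum.reindex[OF sd_inj])

lemma cube_eig:
  "x \<in> eigenspace_L (cube_V d) (cube_E d) (real d) \<longleftrightarrow> x \<in> vecs (cube_V d)
    \<and> (\<forall>A\<in>cube_V d. (\<Sum>i\<in>{0..<d}. x (sd i A)) = 0)"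
proof -
  have "(\<forall>A\<in>cube_V d. (\<Sum>B\<in>{B\<in>cube_V d. cube_E d A B}. x B) = 0)
     \<longleftrightarrow> (\<forall>A\<in>cube_V d. (\<Sum>i\<in>{0..<d}. x (sd i A)) = 0)"
  proof -
    have "\<forall>A\<in>cube_V d. (\<Sum>B\<in>{B\<in>cube_V d. cube_E d A B}. x B) = (\<Sum>i\<in>{0..<d}. x (sd i A))"
      using cube_sum by blast
    then show ?thesis by auto
  qed
  then show ?thesis using eig_d_iff[OF cube_simple cube_regular, of x] by simp
qed

lemma cube_zero:
  "\<forall>(x::nat set \<Rightarrow> real) (k::int). (\<forall>A \<subseteq> {0..<d}. (\<Sum>i\<in>{0..<d}. x (sd i A)) = of_int k * x A)
     \<longrightarrow> odd (k + int d) \<longrightarrow> (\<forall>A \<subseteq> {0..<d}. x A = 0)"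
proof (induction d)
  case 0
  show ?case
  proof (intro allI impI)
    fix x :: "nat set \<Rightarrow> real" and k :: int and A :: "nat set"
    assume h: "\<forall>A \<subseteq> {0..<0}. (\<Sum>i\<in>{0..<0}. x (sd i A)) = of_int k * x A" and k: "odd (k + int 0)"
      and A: "A \<subseteq> {0..<0}"
    have "k \<noteq> 0" using k by auto
    then show "x A = 0" using h A by simp
  qed
next
  case (Suc d)
  show ?case
  proof (rule allI, rule allI, rule impI, rule impI)
    fix x :: "nat set \<Rightarrow> real" and k :: int
    assume H: "\<forall>A \<subseteq> {0..<Suc d}. (\<Sum>i\<in>{0..<Suc d}. x (sd i A)) = of_int k * x A"
      and k: "odd (k + int (Suc d))"
    define s where "s = (\<lambda>B. x B + x (sd d B))"
    define t where "t = (\<lambda>B. x B - x (sd d B))"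
    have H1: "(\<Sum>i\<in>{0..<d}. x (sd i B)) = of_int k * x B - x (sd d B)" if "B \<subseteq> {0..<d}" for B
    proof -
      have "B \<subseteq> {0..<Suc d}" using that by auto
      from H[rule_format, OF this] show ?thesis by simp
    qed
    have H2: "(\<Sum>i\<in>{0..<d}. x (sd d (sd i B))) = of_int k * x (sd d B) - x B" if "B \<subseteq> {0..<d}" for B
    proof -
      have "B \<subseteq> {0..<Suc d}" using that by auto
      then have "sd d B \<subseteq> {0..<Suc d}" using sd_sub[of B "Suc d" d] by simp
      from H[rule_format, OF this]
      have "(\<Sum>i\<in>{0..<Suc d}. x (sd i (sd d B))) = of_int k * x (sd d B)" .
      then show ?thesis by (simp add: sd_comm)
    qed
    have hs: "\<forall>A \<subseteq> {0..<d}. (\<Sum>i\<in>{0..<d}. s (sd i A)) = of_int (k - 1) * s A"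
    proof (intro allI impI)
      fix A assume A: "A \<subseteq> {0..<d}"
      have "(\<Sum>i\<in>{0..<d}. s (sd i A)) = (\<Sum>i\<in>{0..<d}. x (sd i A)) + (\<Sum>i\<in>{0..<d}. x (sd d (sd i A)))"
        unfolding s_def by (simp add: sum.distrib)
      also have "\<dots> = of_int (k - 1) * s A" unfolding H1[OF A] H2[OF A] s_def by (simp add: algebra_simps)
      finally show "(\<Sum>i\<in>{0..<d}. s (sd i A)) = of_int (k - 1) * s A" .
    qed
    have ht: "\<forall>A \<subseteq> {0..<d}. (\<Sum>i\<in>{0..<d}. t (sd i A)) = of_int (k + 1) * t A"
    proof (intro allI impI)
      fix A assume A: "A \<subseteq> {0..<d}"
      have "(\<Sum>i\<in>{0..<d}. t (sd i A)) = (\<Sum>i\<in>{0..<d}. x (sd i A)) - (\<Sum>i\<in>{0..<d}. x (sd d (sd i A)))"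
        unfolding t_def by (simp add: sum_subtractf)
      also have "\<dots> = of_int (k + 1) * t A" unfolding H1[OF A] H2[OF A] t_def by (simp add: algebra_simps)
      finally show "(\<Sum>i\<in>{0..<d}. t (sd i A)) = of_int (k + 1) * t A" .
    qed
    have k1: "odd ((k - 1) + int d)" using k by simp
    have k2: "odd ((k + 1) + int d)" using k by simp
    have s0: "\<forall>A \<subseteq> {0..<d}. s A = 0" using Suc.IH[rule_format, OF hs[rule_format] k1] by blast
    have t0: "\<forall>A \<subseteq> {0..<d}. t A = 0" using Suc.IH[rule_format, OF ht[rule_format] k2] by blast
    have both: "x B = 0 \<and> x (sd d B) = 0" if "B \<subseteq> {0..<d}" for B
    proof -
      have "s B = 0" "t B = 0" using s0 t0 that by auto
      then show ?thesis unfolding s_def t_def by linarith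
    qed
    show "\<forall>A \<subseteq> {0..<Suc d}. x A = 0"
    proof (intro allI impI)
      fix A assume A: "A \<subseteq> {0..<Suc d}"
      show "x A = 0"
      proof (cases "d \<in> A")
        case False
        then have "A \<subseteq> {0..<d}" using A by (auto simp: less_Suc_eq)
        then show ?thesis using both by blast
      next
        case True
        define B where "B = A - {d}"
        have B: "B \<subseteq> {0..<d}" using A unfolding B_def by (auto simp: less_Suc_eq)
        have "sd d B = A" using True unfolding B_def sd_def by auto
        then show ?thesis using both[OF B] by simp
      qed
    qed
  qed
qed

lemma chi_sd:
  assumes "finite A"
  shows "(-1::real) ^ card (sd i A \<inter> S) = (if i \<in> S then -1 else 1) * (-1) ^ card (A \<inter> S)"
proof (cases "i \<in> S")
  case False
  then have "sd i A \<inter> S = A \<inter> S" unfolding sd_def by auto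
  then show ?thesis using False by simp
next
  case iS: True
  show ?thesis
  proof (cases "i \<in> A")
    case True
    have e: "sd i A \<inter> S = (A \<inter> S) - {i}" using True unfolding sd_def by auto
    have iA: "i \<in> A \<inter> S" using True iS by simp
    have fin: "finite (A \<inter> S)" using assms by simp
    have c: "card (A \<inter> S) = Suc (card ((A \<inter> S) - {i}))"
      using card_Suc_Diff1[OF fin iA] by simp
    show ?thesis unfolding e c using iS by simp
  next
    case False
    have e: "sd i A \<inter> S = insert i (A \<inter> S)" using False iS unfolding sd_def by auto
    have fin: "finite (A \<inter> S)" using assms by simp
    have "card (sd i A \<inter> S) = Suc (card (A \<inter> S))" unfolding e using fin False by simp
    then show ?thesis using iS by simp
  qed
qed

lemma sign_sum: "(\<Sum>i\<in>{0..<2*(m::nat)}. (if i < m then -1 else 1 :: real)) = 0"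
proof -
  have "(\<Sum>i\<in>{0..<2*m}. (if i < m then -1 else 1 :: real))
     = (\<Sum>i\<in>{0..<m}. (if i < m then -1 else 1 :: real)) + (\<Sum>i\<in>{m..<2*m}. (if i < m then -1 else 1 :: real))"
    by (rule sum.atLeastLessThan_concat[symmetric]) auto
  also have "(\<Sum>i\<in>{0..<m}. (if i < m then -1 else 1 :: real)) = (\<Sum>i\<in>{0..<m}. -1)"
    by (rule sum.cong) auto
  also have "(\<Sum>i\<in>{m..<2*m}. (if i < m then -1 else 1 :: real)) = (\<Sum>i\<in>{m..<2*m}. 1)"
    by (rule sum.cong) auto
  finally show ?thesis by simp
qed

lemma part4:
  assumes u: "u \<in> cube_V d"
  shows "strongly_cospectral (blowup2_V (cube_V d)) (blowup2_E (cube_E d)) (0, u) (1, u) \<longleftrightarrow> odd d"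
proof -
  have fin: "finite (cube_V d)" by (simp add: cube_V_def)
  have red: "strongly_cospectral (blowup2_V (cube_V d)) (blowup2_E (cube_E d)) (0, u) (1, u)
     \<longleftrightarrow> eigproj (cube_V d) (cube_E d) (real d) (unit_vec u) = (\<lambda>_. 0)"
    by (rule reduce[OF cube_simple cube_regular u])
  show ?thesis
  proof (cases "odd d")
    case True
    have "eigproj (cube_V d) (cube_E d) (real d) (unit_vec u) = (\<lambda>_. 0)"
    proof (rule eigproj_trivial[OF fin], intro ballI ext)
      fix x A assume x: "x \<in> eigenspace_L (cube_V d) (cube_E d) (real d)"
      have xv: "x \<in> vecs (cube_V d)" and xs: "\<forall>A\<in>cube_V d. (\<Sum>i\<in>{0..<d}. x (sd i A)) = 0"
        using x cube_eig by auto
      have h: "\<forall>A \<subseteq> {0..<d}. (\<Sum>i\<in>{0..<d}. x (sd i A)) = of_int 0 * x A"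
        using xs by (simp add: cube_V_def)
      have k: "odd (0 + int d)" using True by simp
      show "x A = 0"
      proof (cases "A \<subseteq> {0..<d}")
        case True then show ?thesis using cube_zero[rule_format, OF h[rule_format] k] by blast
      next
        case False then show ?thesis using xv by (simp add: vecs_def cube_V_def)
      qed
    qed
    then show ?thesis using red True by simp
  next
    case False
    then obtain m where m: "d = 2*m" by (metis evenE)
    define S where "S = {0..<m}"
    define g where "g = (\<lambda>A. if A \<in> cube_V d then (-1::real) ^ card (A \<inter> S) else 0)"
    have "g \<in> eigenspace_L (cube_V d) (cube_E d) (real d)"
      unfolding cube_eig
    proof
      show "g \<in> vecs (cube_V d)" unfolding g_def vecs_def by simp
      show "\<forall>A\<in>cube_V d. (\<Sum>i\<in>{0..<d}. g (sd i A)) = 0"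
      proof
        fix A assume A: "A \<in> cube_V d"
        have Ad: "A \<subseteq> {0..<d}" using A by (simp add: cube_V_def)
        have finA: "finite A" using Ad finite_subset by blast
        have "(\<Sum>i\<in>{0..<d}. g (sd i A)) = (\<Sum>i\<in>{0..<d}. (if i < m then -1 else 1) * (-1::real) ^ card (A \<inter> S))"
        proof (rule sum.cong[OF refl])
          fix i assume "i \<in> {0..<d}"
          then have "sd i A \<in> cube_V d" using sd_sub[OF Ad, of i] by (simp add: cube_V_def)
          then show "g (sd i A) = (if i < m then -1 else 1) * (-1::real) ^ card (A \<inter> S)"
            unfolding g_def using chi_sd[OF finA, of i S] by (simp add: S_def)
        qed
        also have "\<dots> = (\<Sum>i\<in>{0..<2*m}. (if i < m then -1 else 1 :: real)) * (-1::real) ^ card (A \<inter> S)"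
          unfolding m by (simp add: sum_distrib_right)
        also have "\<dots> = 0" by (simp add: sign_sum)
        finally show "(\<Sum>i\<in>{0..<d}. g (sd i A)) = 0" .
      qed
    qed
    moreover have "g u \<noteq> 0" unfolding g_def using u by simp
    ultimately have "eigproj (cube_V d) (cube_E d) (real d) (unit_vec u) \<noteq> (\<lambda>_. 0)"
      by (rule eigproj_nonzero[OF fin u])
    then show ?thesis using red False by simp
  qed
qed

theorem corollary3:
  shows "(\<forall>(V :: 'a set) E (d :: nat) u.
            simple_graph V E \<and> regular V E d \<and> u \<in> V \<longrightarrow>
            (strongly_cospectral (blowup2_V V) (blowup2_E E) (0, u) (1, u)
               \<longleftrightarrow> real d \<notin> eig_support V E u))
       \<and> (\<forall>d u. d \<ge> 1 \<and> u \<in> complete_V (d + 1) \<longrightarrow>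
            strongly_cospectral (blowup2_V (complete_V (d + 1))) (blowup2_E (complete_E (d + 1)))
              (0, u) (1, u))
       \<and> (\<forall>n u. n \<ge> 3 \<and> u \<in> cycle_V n \<longrightarrow>
            (strongly_cospectral (blowup2_V (cycle_V n)) (blowup2_E (cycle_E n)) (0, u) (1, u)
               \<longleftrightarrow> n mod 4 \<noteq> 0))
       \<and> (\<forall>d u. u \<in> cube_V d \<longrightarrow>
            (strongly_cospectral (blowup2_V (cube_V d)) (blowup2_E (cube_E d)) (0, u) (1, u)
               \<longleftrightarrow> odd d))"
proof (intro conjI)
  show "\<forall>(V :: 'a set) E (d :: nat) u.
            simple_graph V E \<and> regular V E d \<and> u \<in> V \<longrightarrow>
            (strongly_cospectral (blowup2_V V) (blowup2_E E) (0, u) (1, u)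
               \<longleftrightarrow> real d \<notin> eig_support V E u)"
  proof (intro allI impI)
    fix V :: "'a set" and E d u
    assume h: "simple_graph V E \<and> regular V E d \<and> u \<in> V"
    have h1: "simple_graph V E" and h2: "regular V E d" and h3: "u \<in> V" using h by simp_all
    show "strongly_cospectral (blowup2_V V) (blowup2_E E) (0, u) (1, u)
               \<longleftrightarrow> real d \<notin> eig_support V E u" by (rule part1[OF h1 h2 h3])
  qed
  show "\<forall>d u. d \<ge> 1 \<and> u \<in> complete_V (d + 1) \<longrightarrow>
            strongly_cospectral (blowup2_V (complete_V (d + 1))) (blowup2_E (complete_E (d + 1)))
              (0, u) (1, u)"
  proof (intro allI impI)
    fix d u :: nat
    assume h: "d \<ge> 1 \<and> u \<in> complete_V (d + 1)"
    have h1: "d \<ge> 1" and h2: "u \<in> complete_V (d + 1)" using h by simp_all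
    show "strongly_cospectral (blowup2_V (complete_V (d + 1))) (blowup2_E (complete_E (d + 1)))
              (0, u) (1, u)" by (rule part2[OF h1 h2])
  qed
  show "\<forall>n u. n \<ge> 3 \<and> u \<in> cycle_V n \<longrightarrow>
            (strongly_cospectral (blowup2_V (cycle_V n)) (blowup2_E (cycle_E n)) (0, u) (1, u)
               \<longleftrightarrow> n mod 4 \<noteq> 0)"
  proof (intro allI impI)
    fix n u :: nat
    assume h: "n \<ge> 3 \<and> u \<in> cycle_V n"
    have h1: "n \<ge> 3" and h2: "u \<in> cycle_V n" using h by simp_all
    show "strongly_cospectral (blowup2_V (cycle_V n)) (blowup2_E (cycle_E n)) (0, u) (1, u)
               \<longleftrightarrow> n mod 4 \<noteq> 0" by (rule part3[OF h1 h2])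
  qed
  show "\<forall>d u. u \<in> cube_V d \<longrightarrow>
            (strongly_cospectral (blowup2_V (cube_V d)) (blowup2_E (cube_E d)) (0, u) (1, u)
               \<longleftrightarrow> odd d)"
  proof (intro allI impI)
    fix d u
    assume h: "u \<in> cube_V d"
    show "strongly_cospectral (blowup2_V (cube_V d)) (blowup2_E (cube_E d)) (0, u) (1, u)
               \<longleftrightarrow> odd d" by (rule part4[OF h])
  qed
qed

end
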